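(* Let $n\ge 2$, $N=\binom n2$, and let $w=w_1\cdots w_N$ be a word in the alphabet $[n-1]$. Then $w_1w_2\cdots w_N$ is a 132-avoiding sorting network of $\mathfrak S_n$ if and only if the reversed word $w_Nw_{N-1}\cdots w_1$ is a 132-avoiding sorting network of $\mathfrak S_n$.
   Context: For $i\in[n-1]$ let $s_i=(i,i+1)\in\mathfrak S_n$ be the adjacent transposition, and let $w_0\in\mathfrak S_n$ be the reverse permutation $w_0(i)=n+1-i$. A sorting network (of $\mathfrak S_n$) is a word $w=w_1\cdots w_N$, $N=\binom n2$, in the alphabet $[n-1]$ with $s_{w_1}s_{w_2}\cdots s_{w_N}=w_0$ (necessarily a reduced word). Intermediate permutations are $\sigma_0=\mathrm{id}$ and $\sigma_k=s_{w_1}\cdots s_{w_k}$, where the product is formed from the left so that, in one-line notation, $\sigma_k$ is obtained from $\sigma_{k-1}$ by swapping the entries in positions $w_k$ and $w_k+1$. A sorting network is 132-avoiding if every $\sigma_k$, $k\in[N]$, avoids the pattern 132 (in one-line notation). *)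

theory Defs
  imports Main
begin

text \<open>Permutations of [n] in one-line notation are lists of length n with entries 1..n.
  Positions are 1-indexed in the paper; list positions are 0-indexed here.\<close>

definition swap_adj :: "nat list \<Rightarrow> nat \<Rightarrow> nat list" where
  "swap_adj p i = p[i - 1 := p ! i, i := p ! (i - 1)]"
  \<comment> \<open>swap the entries in (1-indexed) positions i and i+1\<close>

definition id_perm :: "nat \<Rightarrow> nat list" where
  "id_perm n = [1..<n+1]"

definition rev_perm :: "nat \<Rightarrow> nat list" where
  "rev_perm n = rev [1..<n+1]"

text \<open>sigma n w k = s_{w_1} ... s_{w_k} in one-line notation\<close>
definition sigma :: "nat \<Rightarrow> nat list \<Rightarrow> nat \<Rightarrow> nat list" where
  "sigma n w k = foldl swap_adj (id_perm n) (take k w)"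

definition is_sorting_network :: "nat \<Rightarrow> nat list \<Rightarrow> bool" where
  "is_sorting_network n w \<longleftrightarrow>
     length w = n choose 2 \<and> (\<forall>a \<in> set w. 1 \<le> a \<and> a \<le> n - 1) \<and>
     sigma n w (length w) = rev_perm n"

definition contains_132 :: "nat list \<Rightarrow> bool" where
  "contains_132 p \<longleftrightarrow> (\<exists>i j k. i < j \<and> j < k \<and> k < length p \<and>
      p ! i < p ! k \<and> p ! k < p ! j)"

definition avoids_132 :: "nat list \<Rightarrow> bool" where
  "avoids_132 p \<longleftrightarrow> \<not> contains_132 p"

definition is_132_avoiding_sorting_network :: "nat \<Rightarrow> nat list \<Rightarrow> bool" where
  "is_132_avoiding_sorting_network n w \<longleftrightarrow>
     is_sorting_network n w \<and> (\<forall>k \<in> {1..length w}. avoids_132 (sigma n w k))"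

end

theory Submission imports Defs begin

definition before :: "nat list \<Rightarrow> nat \<Rightarrow> nat \<Rightarrow> bool" where
  "before p x y \<longleftrightarrow> (\<exists>k l. k < l \<and> l < length p \<and> p!k = x \<and> p!l = y)"

definition Inv :: "nat list \<Rightarrow> (nat \<times> nat) set" where
  "Inv p = {(a,b). a < b \<and> before p b a}"

lemma swap_len[simp]: "length (swap_adj p i) = length p"
  by (simp add: swap_adj_def)

lemma swap_nth:
  assumes "1 \<le> i" "i < length p" "k < length p"
  shows "swap_adj p i ! k = (if k = i-1 then p!i else if k = i then p!(i-1) else p!k)"
  using assms by (auto simp: swap_adj_def nth_list_update)

lemma swap_invol:
  assumes "1 \<le> i" "i < length p"
  shows "swap_adj (swap_adj p i) i = p"
  by (rule nth_equalityI) (use assms in \<open>auto simp: swap_nth\<close>)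

lemma swap_map:
  assumes "i < length p"
  shows "swap_adj (map f p) i = map f (swap_adj p i)"
  using assms by (simp add: swap_adj_def map_update)

lemma swap_distinct:
  assumes "1 \<le> i" "i < length p"
  shows "distinct (swap_adj p i) = distinct p" "set (swap_adj p i) = set p"
  using assms by (simp_all add: swap_adj_def)

lemma before_swap_other:
  assumes "1 \<le> i" "i < length p" "before (swap_adj p i) x y" "\<not> (x = p!i \<and> y = p!(i-1))"
  shows "before p x y"
proof -
  obtain k l where kl: "k < l" "l < length p" "swap_adj p i ! k = x" "swap_adj p i ! l = y"
    using assms(3) by (auto simp: before_def)
  have x: "x = (if k = i-1 then p!i else if k = i then p!(i-1) else p!k)"
    using kl assms swap_nth[of i p k] by simp
  have y: "y = (if l = i-1 then p!i else if l = i then p!(i-1) else p!l)"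
    using kl assms swap_nth[of i p l] by simp
  show ?thesis
  proof (cases "k = i-1")
    case True
    then have "l \<noteq> i" using assms(4) x y kl by auto
    then have "l > i" using True kl assms(1) by auto
    then show ?thesis using x y True kl unfolding before_def by (intro exI[of _ i] exI[of _ l]) auto
  next
    case k: False
    show ?thesis
    proof (cases "k = i")
      case True
      then have "l > i" using kl by auto
      then show ?thesis using x y True k kl assms unfolding before_def
        by (intro exI[of _ "i-1"] exI[of _ l]) auto
    next
      case k2: False
      show ?thesis
      proof (cases "l = i-1")
        case True
        then show ?thesis using x y k k2 kl assms unfolding before_def
          by (intro exI[of _ k] exI[of _ i]) auto
      next
        case l: False
        show ?thesis
        proof (cases "l = i")
          case True
          then have "k < i-1" using k kl by auto
          then show ?thesis using x y k k2 l True kl assms unfolding before_def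
            by (intro exI[of _ k] exI[of _ "i-1"]) auto
        next
          case False
          then show ?thesis using x y k k2 l kl assms unfolding before_def
            by (intro exI[of _ k] exI[of _ l]) auto
        qed
      qed
    qed
  qed
qed

lemma before_swap_new:
  assumes "1 \<le> i" "i < length p"
  shows "before (swap_adj p i) (p!i) (p!(i-1))"
  unfolding before_def using assms
  by (intro exI[of _ "i-1"] exI[of _ i]) (auto simp: swap_nth)

lemma Inv_asc:
  assumes "1 \<le> i" "i < length p" "p!(i-1) < p!i"
  shows "Inv (swap_adj p i) = insert (p!(i-1), p!i) (Inv p)"
proof
  show "Inv (swap_adj p i) \<subseteq> insert (p!(i-1), p!i) (Inv p)"
  proof
    fix z assume z: "z \<in> Inv (swap_adj p i)"
    obtain a b where ab: "z = (a,b)" by force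
    show "z \<in> insert (p!(i-1), p!i) (Inv p)"
    proof (cases "b = p!i \<and> a = p!(i-1)")
      case True then show ?thesis using ab by simp
    next
      case False
      then have "before p b a" using before_swap_other[OF assms(1,2), of b a] z ab
        by (auto simp: Inv_def)
      then show ?thesis using z ab by (auto simp: Inv_def)
    qed
  qed
next
  let ?q = "swap_adj p i"
  have q1: "?q ! i = p!(i-1)" "?q ! (i-1) = p!i" using assms by (auto simp: swap_nth)
  show "insert (p!(i-1), p!i) (Inv p) \<subseteq> Inv ?q"
  proof
    fix z assume z: "z \<in> insert (p!(i-1), p!i) (Inv p)"
    show "z \<in> Inv ?q"
    proof (cases "z = (p!(i-1), p!i)")
      case True then show ?thesis using before_swap_new[OF assms(1,2)] assms(3) by (simp add: Inv_def)
    next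
      case False
      then obtain a b where ab: "z = (a,b)" "a < b" "before p b a" using z by (auto simp: Inv_def)
      have "before (swap_adj ?q i) b a" using ab swap_invol[OF assms(1,2)] by simp
      moreover have "\<not> (b = ?q!i \<and> a = ?q!(i-1))" using q1 ab assms(3) by auto
      ultimately have "before ?q b a" using before_swap_other[of i ?q b a] assms by simp
      then show ?thesis using ab by (simp add: Inv_def)
    qed
  qed
qed

lemma Inv_finite: "finite (Inv p)"
proof -
  have "Inv p \<subseteq> set p \<times> set p" by (auto simp: Inv_def before_def)
  then show ?thesis by (rule finite_subset) simp
qed

lemma Inv_desc:
  assumes "1 \<le> i" "i < length p" "p!i < p!(i-1)" "distinct p"
  shows "card (Inv (swap_adj p i)) < card (Inv p)"
proof -
  let ?q = "swap_adj p i"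
  have q1: "?q ! i = p!(i-1)" "?q ! (i-1) = p!i" using assms by (auto simp: swap_nth)
  have dq: "distinct ?q" using assms swap_distinct by simp
  have lq: "i < length ?q" using assms by simp
  have "Inv (swap_adj ?q i) = insert (?q!(i-1), ?q!i) (Inv ?q)"
    using Inv_asc[OF assms(1) lq] q1 assms(3) by simp
  then have e: "Inv p = insert (?q!(i-1), ?q!i) (Inv ?q)" using swap_invol[OF assms(1,2)] by simp
  have "(?q!(i-1), ?q!i) \<notin> Inv ?q"
  proof
    assume "(?q!(i-1), ?q!i) \<in> Inv ?q"
    then obtain k l where kl: "k < l" "l < length ?q" "?q!k = ?q!i" "?q!l = ?q!(i-1)"
      by (auto simp: Inv_def before_def)
    have "k = i" using kl dq lq nth_eq_iff_index_eq[of ?q k i] by auto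
    moreover have "l = i-1" using kl dq lq nth_eq_iff_index_eq[of ?q l "i-1"] by auto
    ultimately show False using kl by simp
  qed
  then show ?thesis using e Inv_finite by (simp add: card_insert_if)
qed

lemma id_nth: "k < n \<Longrightarrow> id_perm n ! k = Suc k"
  by (simp add: id_perm_def del: upt_Suc)
lemma rev_nth': "k < n \<Longrightarrow> rev_perm n ! k = n - k"
  by (simp add: rev_perm_def rev_nth del: upt_Suc)
lemma id_len[simp]: "length (id_perm n) = n" by (simp add: id_perm_def)
lemma rev_len[simp]: "length (rev_perm n) = n" by (simp add: rev_perm_def)

lemma map_c_rev: "map (\<lambda>x. Suc n - x) (rev_perm n) = id_perm n"
  by (rule nth_equalityI) (auto simp: rev_nth' id_nth)
lemma map_c_id: "map (\<lambda>x. Suc n - x) (id_perm n) = rev_perm n"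
  by (rule nth_equalityI) (auto simp: rev_nth' id_nth)

lemma sig0[simp]: "sigma n w 0 = id_perm n" by (simp add: sigma_def)
lemma sig_step: "j < length w \<Longrightarrow> sigma n w (Suc j) = swap_adj (sigma n w j) (w!j)"
  by (simp add: sigma_def take_Suc_conv_app_nth)

lemma Inv_id: "Inv (id_perm n) = {}"
  by (auto simp: Inv_def before_def id_nth)

lemma id_no132: "\<not> contains_132 (id_perm n)"
  by (auto simp: contains_132_def id_nth)

definition has312 :: "nat list \<Rightarrow> bool" where
  "has312 p \<longleftrightarrow> (\<exists>i j k. i < j \<and> j < k \<and> k < length p \<and> p!j < p!k \<and> p!k < p!i)"

lemma c132: assumes "\<forall>x\<in>set p. x \<le> n"
  shows "contains_132 (map (\<lambda>x. Suc n - x) p) \<longleftrightarrow> has312 p"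
proof -
  have b: "\<And>i. i < length p \<Longrightarrow> p!i \<le> n" using assms by auto
  have e: "(Suc n - p!i < Suc n - p!j) = (p!j < p!i)" if "i < length p" "j < length p" for i j
    using b[OF that(1)] b[OF that(2)] by arith
  show ?thesis unfolding contains_132_def has312_def
  proof
    assume "\<exists>i j k. i < j \<and> j < k \<and> k < length (map (\<lambda>x. Suc n - x) p) \<and>
      map (\<lambda>x. Suc n - x) p ! i < map (\<lambda>x. Suc n - x) p ! k \<and> map (\<lambda>x. Suc n - x) p ! k < map (\<lambda>x. Suc n - x) p ! j"
    then obtain i j k where "i < j" "j < k" "k < length p" "Suc n - p!i < Suc n - p!k" "Suc n - p!k < Suc n - p!j" by auto
    then show "\<exists>i j k. i < j \<and> j < k \<and> k < length p \<and> p ! j < p ! k \<and> p ! k < p ! i"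
      using e[of i k] e[of k j] by (intro exI[of _ i] exI[of _ j] exI[of _ k]) auto
  next
    assume "\<exists>i j k. i < j \<and> j < k \<and> k < length p \<and> p ! j < p ! k \<and> p ! k < p ! i"
    then obtain i j k where "i < j" "j < k" "k < length p" "p ! j < p ! k" "p ! k < p ! i" by auto
    then show "\<exists>i j k. i < j \<and> j < k \<and> k < length (map (\<lambda>x. Suc n - x) p) \<and>
      map (\<lambda>x. Suc n - x) p ! i < map (\<lambda>x. Suc n - x) p ! k \<and> map (\<lambda>x. Suc n - x) p ! k < map (\<lambda>x. Suc n - x) p ! j"
      using e[of i k] e[of k j] by (intro exI[of _ i] exI[of _ j] exI[of _ k]) auto
  qed
qed

locale alph =
  fixes n :: nat and w :: "nat list"
  assumes alph: "\<forall>a \<in> set w. 1 \<le> a \<and> a \<le> n - 1"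
begin

abbreviation "\<sigma> k \<equiv> sigma n w k"

lemma widx: "j < length w \<Longrightarrow> 1 \<le> w!j \<and> w!j < n"
  using alph nth_mem[of j w] by fastforce

lemma sig_inv: "k \<le> length w \<Longrightarrow> length (\<sigma> k) = n \<and> distinct (\<sigma> k) \<and> set (\<sigma> k) = {1..n}"
proof (induction k)
  case 0 then show ?case by (auto simp: id_perm_def)
next
  case (Suc k)
  then have "k < length w" by simp
  with Suc widx[of k] show ?case by (simp add: sig_step swap_distinct)
qed

end


lemma pairs_card: "card {(a,b). 1 \<le> a \<and> a < b \<and> b \<le> (n::nat)} = n choose 2"
proof (induction n)
  case 0
  have e0: "{(a,b). Suc 0 \<le> a \<and> a < b \<and> b = (0::nat)} = {}" by auto
  show ?case by (simp add: e0)
next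
  case (Suc n)
  have e: "{(a,b). 1 \<le> a \<and> a < b \<and> b \<le> Suc n} =
     {(a,b). 1 \<le> a \<and> a < b \<and> b \<le> n} \<union> (\<lambda>a. (a, Suc n)) ` {1..n}" by auto
  have f: "finite {(a,b). 1 \<le> a \<and> a < b \<and> b \<le> (n::nat)}"
    by (rule finite_subset[of _ "{1..n} \<times> {1..n}"]) auto
  have d: "{(a,b). 1 \<le> a \<and> a < b \<and> b \<le> n} \<inter> (\<lambda>a. (a, Suc n)) ` {1..n} = {}" by auto
  have "card ((\<lambda>a. (a, Suc n)) ` {1..n}) = n" by (subst card_image) (auto simp: inj_on_def)
  then show ?case using Suc e f d by (simp add: card_Un_disjoint numeral_2_eq_2)
qed

lemma Inv_rev_card: "n choose 2 \<le> card (Inv (rev_perm n))"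
proof -
  have sub: "{(a,b). 1 \<le> a \<and> a < b \<and> b \<le> (n::nat)} \<subseteq> Inv (rev_perm n)"
  proof
    fix z assume "z \<in> {(a,b). 1 \<le> a \<and> a < b \<and> b \<le> (n::nat)}"
    then obtain a b where ab: "z = (a,b)" "1 \<le> a" "a < b" "b \<le> n" by auto
    have "before (rev_perm n) b a" unfolding before_def
      by (rule exI[of _ "n-b"], rule exI[of _ "n-a"]) (use ab in \<open>auto simp: rev_nth'\<close>)
    then show "z \<in> Inv (rev_perm n)" using ab by (simp add: Inv_def)
  qed
  then show ?thesis using pairs_card[of n] card_mono[OF Inv_finite sub] by simp
qed

locale net = alph +
  assumes len: "length w = n choose 2"
    and fin: "\<sigma> (length w) = rev_perm n"
begin

lemma step_cases: assumes "t < length w"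
  shows "\<sigma> t ! (w!t - 1) < \<sigma> t ! (w!t) \<or> \<sigma> t ! (w!t) < \<sigma> t ! (w!t - 1)"
proof -
  have "distinct (\<sigma> t)" "length (\<sigma> t) = n" using sig_inv[of t] assms by auto
  moreover have "1 \<le> w!t" "w!t < n" using widx assms by auto
  ultimately have "\<sigma> t ! (w!t - 1) \<noteq> \<sigma> t ! (w!t)" using nth_eq_iff_index_eq[of "\<sigma> t" "w!t - 1" "w!t"] by auto
  then show ?thesis by linarith
qed

lemma card_step: assumes "t < length w"
  shows "card (Inv (\<sigma> (Suc t))) \<le> Suc (card (Inv (\<sigma> t)))"
    and "\<sigma> t ! (w!t) < \<sigma> t ! (w!t - 1) \<Longrightarrow> card (Inv (\<sigma> (Suc t))) < card (Inv (\<sigma> t))"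
proof -
  have i: "distinct (\<sigma> t)" "length (\<sigma> t) = n" using sig_inv[of t] assms by auto
  have j: "1 \<le> w!t" "w!t < n" using widx assms by auto
  show "\<sigma> t ! (w!t) < \<sigma> t ! (w!t - 1) \<Longrightarrow> card (Inv (\<sigma> (Suc t))) < card (Inv (\<sigma> t))"
    using Inv_desc[of "w!t" "\<sigma> t"] i j assms by (simp add: sig_step)
  show "card (Inv (\<sigma> (Suc t))) \<le> Suc (card (Inv (\<sigma> t)))"
  proof (cases "\<sigma> t ! (w!t - 1) < \<sigma> t ! (w!t)")
    case True
    then show ?thesis using Inv_asc[of "w!t" "\<sigma> t"] i j assms
      by (simp add: sig_step card_insert_if Inv_finite)
  next
    case False
    then have "\<sigma> t ! (w!t) < \<sigma> t ! (w!t - 1)" using step_cases assms by blast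
    then show ?thesis using Inv_desc[of "w!t" "\<sigma> t"] i j assms by (simp add: sig_step)
  qed
qed

lemma card_le: "k \<le> length w \<Longrightarrow> card (Inv (\<sigma> k)) \<le> k"
proof (induction k)
  case 0 then show ?case by (simp add: Inv_id)
next
  case (Suc k) then show ?case using card_step(1)[of k] by simp
qed

lemma asc: assumes "t < length w" shows "\<sigma> t ! (w!t - 1) < \<sigma> t ! (w!t)"
proof (rule ccontr)
  assume "\<not> ?thesis"
  then have d: "\<sigma> t ! (w!t) < \<sigma> t ! (w!t - 1)" using step_cases assms by blast
  have h: "Suc t + m \<le> length w \<Longrightarrow> card (Inv (\<sigma> (Suc t + m))) + 2 \<le> Suc t + m" for m
  proof (induction m)
    case 0 then show ?case using card_step(2)[OF assms d] card_le[of t] assms by simp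
  next
    case (Suc m) then show ?case using card_step(1)[of "Suc t + m"] by simp
  qed
  obtain m where me: "length w = Suc t + m" using assms less_iff_Suc_add by blast
  have "card (Inv (\<sigma> (length w))) + 2 \<le> length w" using h[of m] me by simp
  then show False using fin len Inv_rev_card[of n] by simp
qed

lemma Inv_step: "t < length w \<Longrightarrow>
   Inv (\<sigma> (Suc t)) = insert (\<sigma> t ! (w!t - 1), \<sigma> t ! (w!t)) (Inv (\<sigma> t))"
  using Inv_asc[of "w!t" "\<sigma> t"] sig_inv[of t] widx[of t] asc[of t] by (simp add: sig_step)

lemma Inv_mono: "t \<le> k \<Longrightarrow> k \<le> length w \<Longrightarrow> Inv (\<sigma> t) \<subseteq> Inv (\<sigma> k)"
proof (induction k rule: dec_induct)
  case base then show ?case by simp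
next
  case (step m) then show ?case using Inv_step[of m] by auto
qed

lemma Inv_first: "j \<le> length w \<Longrightarrow> z \<in> Inv (\<sigma> j) \<Longrightarrow> \<exists>t<j. z \<notin> Inv (\<sigma> t) \<and> z \<in> Inv (\<sigma> (Suc t))"
proof (induction j)
  case 0 then show ?case by (simp add: Inv_id)
next
  case (Suc j)
  then show ?case
  proof (cases "z \<in> Inv (\<sigma> j)")
    case True
    then obtain t where "t < j" "z \<notin> Inv (\<sigma> t) \<and> z \<in> Inv (\<sigma> (Suc t))" using Suc.IH Suc.prems by auto
    then show ?thesis by (intro exI[of _ t]) auto
  next
    case False then show ?thesis using Suc by blast
  qed
qed


lemma no312:
  assumes av: "\<forall>k\<in>{1..length w}. avoids_132 (\<sigma> k)" and j: "j \<le> length w"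
  shows "\<not> has312 (\<sigma> j)"
proof
  assume "has312 (\<sigma> j)"
  then obtain i0 l m where iml: "i0 < l" "l < m" "m < length (\<sigma> j)"
     "\<sigma> j ! l < \<sigma> j ! m" "\<sigma> j ! m < \<sigma> j ! i0" unfolding has312_def by auto
  define a where "a = \<sigma> j ! l"
  define b where "b = \<sigma> j ! m"
  define c where "c = \<sigma> j ! i0"
  have ij: "length (\<sigma> j) = n" "distinct (\<sigma> j)" "set (\<sigma> j) = {1..n}" using sig_inv j by auto
  have "before (\<sigma> j) c a" unfolding before_def c_def a_def using iml
    by (intro exI[of _ i0] exI[of _ l]) simp
  then have "(a,c) \<in> Inv (\<sigma> j)" using iml a_def b_def c_def by (simp add: Inv_def)
  then obtain t where t: "t < j" "(a,c) \<notin> Inv (\<sigma> t)" "(a,c) \<in> Inv (\<sigma> (Suc t))"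
    using Inv_first[OF j] by blast
  have tl: "t < length w" using t j by simp
  define i where "i = w!t"
  have ii: "1 \<le> i" "i < n" using widx tl i_def by auto
  have it: "length (\<sigma> t) = n" "distinct (\<sigma> t)" "set (\<sigma> t) = {1..n}" using sig_inv tl by auto
  have ac: "a = \<sigma> t ! (i-1)" "c = \<sigma> t ! i" using t Inv_step[OF tl] i_def by auto
  have nab: "(a,b) \<notin> Inv (\<sigma> t)"
  proof
    assume "(a,b) \<in> Inv (\<sigma> t)"
    then have "(a,b) \<in> Inv (\<sigma> j)" using Inv_mono[of t j] t j by auto
    then obtain k' l' where kl: "k' < l'" "l' < length (\<sigma> j)" "\<sigma> j ! k' = b" "\<sigma> j ! l' = a"
      by (auto simp: Inv_def before_def)
    have "k' = m" using kl iml ij b_def nth_eq_iff_index_eq[of "\<sigma> j" k' m] by auto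
    moreover have "l' = l" using kl iml ij a_def nth_eq_iff_index_eq[of "\<sigma> j" l' l] by auto
    ultimately show False using kl iml by simp
  qed
  have "b \<in> set (\<sigma> t)" using it ij iml b_def by (metis nth_mem)
  then obtain m' where m': "m' < n" "\<sigma> t ! m' = b" using it by (metis in_set_conv_nth)
  have "m' \<noteq> i-1" using m' ac iml a_def b_def by auto
  moreover have "m' \<noteq> i" using m' ac iml c_def b_def by auto
  moreover have "\<not> m' < i-1"
  proof
    assume "m' < i-1"
    then have "before (\<sigma> t) b a" unfolding before_def using m' ac ii it
      by (intro exI[of _ m'] exI[of _ "i-1"]) auto
    then show False using nab iml a_def b_def by (simp add: Inv_def)
  qed
  ultimately have mi: "i < m'" by auto
  have "contains_132 (\<sigma> t)" unfolding contains_132_def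
    using mi m' ac ii it iml a_def b_def c_def
    by (intro exI[of _ "i-1"] exI[of _ i] exI[of _ m']) auto
  moreover have "t \<noteq> 0"
  proof
    assume "t = 0"
    then show False using calculation id_no132[of n] by simp
  qed
  ultimately show False using av tl by (auto simp: avoids_132_def)
qed

lemma rev_sig: "k \<le> length w \<Longrightarrow> sigma n (rev w) k = map (\<lambda>x. Suc n - x) (\<sigma> (length w - k))"
proof (induction k)
  case 0 then show ?case by (simp add: fin map_c_rev)
next
  case (Suc k)
  define j where "j = length w - Suc k"
  have jl: "j < length w" "length w - k = Suc j" using Suc.prems j_def by auto
  have r: "rev w ! k = w ! j" using Suc.prems j_def by (simp add: rev_nth)
  have ii: "1 \<le> w!j" "w!j < n" using widx jl by auto
  have lj: "length (\<sigma> j) = n" using sig_inv jl by auto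
  have "sigma n (rev w) (Suc k) = swap_adj (sigma n (rev w) k) (rev w ! k)"
    using Suc.prems by (simp add: sig_step)
  also have "\<dots> = swap_adj (map (\<lambda>x. Suc n - x) (swap_adj (\<sigma> j) (w!j))) (w!j)"
    using Suc jl r by (simp add: sig_step)
  also have "\<dots> = map (\<lambda>x. Suc n - x) (\<sigma> j)"
    using swap_map[of "w!j" "swap_adj (\<sigma> j) (w!j)"] swap_invol[of "w!j" "\<sigma> j"] ii lj by simp
  finally show ?case using j_def by simp
qed

lemma dir:
  assumes av: "\<forall>k\<in>{1..length w}. avoids_132 (\<sigma> k)"
  shows "is_132_avoiding_sorting_network n (rev w)"
  unfolding is_132_avoiding_sorting_network_def is_sorting_network_def
proof (intro conjI ballI)
  show "length (rev w) = n choose 2" using len by simp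
  show "\<And>a. a \<in> set (rev w) \<Longrightarrow> 1 \<le> a" "\<And>a. a \<in> set (rev w) \<Longrightarrow> a \<le> n - 1" using alph by auto
  show "sigma n (rev w) (length (rev w)) = rev_perm n" using rev_sig[of "length w"] by (simp add: map_c_id)
  fix k assume k: "k \<in> {1..length (rev w)}"
  then have e: "sigma n (rev w) k = map (\<lambda>x. Suc n - x) (\<sigma> (length w - k))" using rev_sig by simp
  have "\<forall>x\<in>set (\<sigma> (length w - k)). x \<le> n" using sig_inv[of "length w - k"] by auto
  then show "avoids_132 (sigma n (rev w) k)"
    using e c132 no312[OF av, of "length w - k"] by (simp add: avoids_132_def)
qed

end

theorem mainTheorem1:
  fixes n :: nat and w :: "nat list"
  assumes "n \<ge> 2"
    and "length w = n choose 2"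
    and "\<forall>a \<in> set w. 1 \<le> a \<and> a \<le> n - 1"
  shows "is_132_avoiding_sorting_network n w \<longleftrightarrow> is_132_avoiding_sorting_network n (rev w)"
proof
  assume h: "is_132_avoiding_sorting_network n w"
  interpret net n w
    using h assms by unfold_locales (auto simp: is_132_avoiding_sorting_network_def is_sorting_network_def)
  show "is_132_avoiding_sorting_network n (rev w)"
    using dir h by (simp add: is_132_avoiding_sorting_network_def)
next
  assume h: "is_132_avoiding_sorting_network n (rev w)"
  interpret net n "rev w"
    using h assms by unfold_locales (auto simp: is_132_avoiding_sorting_network_def is_sorting_network_def)
  show "is_132_avoiding_sorting_network n w"
    using dir h by (simp add: is_132_avoiding_sorting_network_def)
qed

end
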